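(* Let $\mathcal{Q}\subseteq\mathbb{R}^n$ and consider the fully actuated robotic system $\mathbf{D}(\mathbf{q})\ddot{\mathbf{q}}+\mathbf{C}(\mathbf{q},\dot{\mathbf{q}})\dot{\mathbf{q}}+\mathbf{G}(\mathbf{q})=\mathbf{B}\mathbf{u}$ with $\mathbf{u}\in\mathbb{R}^m$, $m=n$ and $\mathbf{B}$ invertible. Let $h_0:\mathcal{Q}\to\mathbb{R}$ be continuously differentiable and suppose there exist a continuously differentiable $\mathbf{k}_0:\mathcal{Q}\to\mathbb{R}^n$ and an extended class $\mathcal{K}_\infty$ function $\alpha$ with $\nabla h_0(\mathbf{q})\cdot\mathbf{k}_0(\mathbf{q})>-\alpha(h_0(\mathbf{q}))$ for all $\mathbf{q}\in\mathcal{Q}$. For $\mu>0$ let $$h(\mathbf{q},\dot{\mathbf{q}})=h_0(\mathbf{q})-\frac{1}{2\mu}(\dot{\mathbf{q}}-\mathbf{k}_0(\mathbf{q}))^\top\mathbf{D}(\mathbf{q})(\dot{\mathbf{q}}-\mathbf{k}_0(\mathbf{q})),\qquad \mathcal{C}=\{(\mathbf{q},\dot{\mathbf{q}})\in T\mathcal{Q}:h(\mathbf{q},\dot{\mathbf{q}})\ge0\}.$$ Then $h$ is an energy-based control barrier function for the robotic system on $\mathcal{C}$.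
   Context: $\mathbf{D}(\mathbf{q})$ is the positive definite inertia matrix, $\mathbf{C}$ the Coriolis matrix, $\mathbf{G}$ the gravity term, $\mathbf{B}$ the actuation matrix. An extended class $\mathcal{K}_\infty$ function is a continuous, strictly increasing $\alpha:\mathbb{R}\to\mathbb{R}$ with $\alpha(0)=0$ and $\alpha(s)\to\pm\infty$ as $s\to\pm\infty$. Energy-based CBF: the function $h$ above (with $\mathbf{k}_0$ continuously differentiable) defining $\mathcal{C}$ is an energy-based control barrier function for the robotic system on $\mathcal{C}$ if there exists an extended class $\mathcal{K}_\infty$ function $\alpha$ such that for all $(\mathbf{q},\dot{\mathbf{q}})\in T\mathcal{Q}$, $$\sup_{\mathbf{u}\in\mathbb{R}^m}\Big\{\tfrac{1}{\mu}(\dot{\mathbf{q}}-\mathbf{k}_0(\mathbf{q}))^\top\Big[\mathbf{D}(\mathbf{q})\tfrac{\partial\mathbf{k}_0}{\partial\mathbf{q}}(\mathbf{q})\dot{\mathbf{q}}+\mathbf{C}(\mathbf{q},\dot{\mathbf{q}})\mathbf{k}_0(\mathbf{q})+\mathbf{G}(\mathbf{q})-\mathbf{B}\mathbf{u}\Big]+\nabla h_0(\mathbf{q})\cdot\dot{\mathbf{q}}\Big\}>-\alpha(h(\mathbf{q},\dot{\mathbf{q}})).$$ *)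

theory Defs
  imports "HOL-Analysis.Analysis"
begin

definition ext_class_Kinf :: "(real \<Rightarrow> real) \<Rightarrow> bool" where
  "ext_class_Kinf \<alpha> \<longleftrightarrow> continuous_on UNIV \<alpha> \<and> strict_mono \<alpha> \<and> \<alpha> 0 = 0
     \<and> filterlim \<alpha> at_top at_top \<and> filterlim \<alpha> at_bot at_bot"

definition grad :: "(real^'n \<Rightarrow> real) \<Rightarrow> real^'n \<Rightarrow> real^'n" where
  "grad f q = (\<chi> i. frechet_derivative f (at q) (axis i 1))"

definition jac :: "(real^'n \<Rightarrow> real^'n) \<Rightarrow> real^'n \<Rightarrow> real^'n^'n" where
  "jac f q = matrix (frechet_derivative f (at q))"

definition C1_on :: "'a::euclidean_space set \<Rightarrow> ('a \<Rightarrow> 'b::euclidean_space) \<Rightarrow> bool" where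
  "C1_on S f \<longleftrightarrow> (\<forall>x\<in>S. f differentiable (at x))
      \<and> continuous_on S (\<lambda>x. frechet_derivative f (at x))"

definition hE :: "(real^'n \<Rightarrow> real^'n^'n) \<Rightarrow> (real^'n \<Rightarrow> real) \<Rightarrow> (real^'n \<Rightarrow> real^'n)
    \<Rightarrow> real \<Rightarrow> real^'n \<Rightarrow> real^'n \<Rightarrow> real" where
  "hE D h0 k0 \<mu> q qd = h0 q - 1 / (2 * \<mu>) * ((qd - k0 q) \<bullet> (D q *v (qd - k0 q)))"

text \<open>Energy-based CBF for D(q) qdd + C(q,qd) qd + G(q) = B u, with TQ = Q x R^n
  and u ranging over R^m (here m = n). The supremum is taken in the extended reals.\<close>
definition energy_CBF ::
  "(real^'n) set \<Rightarrow> (real^'n \<Rightarrow> real^'n^'n) \<Rightarrow> (real^'n \<Rightarrow> real^'n \<Rightarrow> real^'n^'n)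
   \<Rightarrow> (real^'n \<Rightarrow> real^'n) \<Rightarrow> real^'m^'n \<Rightarrow> (real^'n \<Rightarrow> real) \<Rightarrow> (real^'n \<Rightarrow> real^'n)
   \<Rightarrow> real \<Rightarrow> bool" where
  "energy_CBF Q D C G B h0 k0 \<mu> \<longleftrightarrow>
     (\<exists>\<alpha>. ext_class_Kinf \<alpha> \<and>
       (\<forall>q\<in>Q. \<forall>qd::real^'n.
          (SUP u::real^'m. ereal (
             (1 / \<mu>) * ((qd - k0 q) \<bullet>
                 (D q *v (jac k0 q *v qd) + C q qd *v k0 q + G q - B *v u))
             + grad h0 q \<bullet> qd))
          > ereal (- \<alpha> (hE D h0 k0 \<mu> q qd))))"

end

theory Submission
  imports Defs
begin

theorem lemma5:
  fixes Q :: "(real^'n) set"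
    and D :: "real^'n \<Rightarrow> real^'n^'n"
    and C :: "real^'n \<Rightarrow> real^'n \<Rightarrow> real^'n^'n"
    and G :: "real^'n \<Rightarrow> real^'n"
    and B :: "real^'n^'n"
    and h0 :: "real^'n \<Rightarrow> real"
    and k0 :: "real^'n \<Rightarrow> real^'n"
    and \<alpha> :: "real \<Rightarrow> real"
    and \<mu> :: real
  assumes Q_open: "open Q"
    and D_sym: "\<forall>q\<in>Q. transpose (D q) = D q"
    and D_pd: "\<forall>q\<in>Q. \<forall>x. x \<noteq> 0 \<longrightarrow> x \<bullet> (D q *v x) > 0"
    and B_inv: "invertible B"
    and h0_C1: "C1_on Q h0"
    and k0_C1: "C1_on Q k0"
    and alpha: "ext_class_Kinf \<alpha>"
    and nominal: "\<forall>q\<in>Q. grad h0 q \<bullet> k0 q > - \<alpha> (h0 q)"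
    and mu_pos: "\<mu> > 0"
  shows "energy_CBF Q D C G B h0 k0 \<mu>"
proof -
  obtain Bi where Bi: "B ** Bi = mat 1" using B_inv unfolding invertible_def by blast
  show ?thesis unfolding energy_CBF_def
  proof (intro exI[of _ \<alpha>] conjI alpha ballI allI)
    fix q qd assume qQ: "q \<in> Q"
    define e where "e = qd - k0 q"
    define K where "K = (1 / \<mu>) * (e \<bullet> (D q *v (jac k0 q *v qd) + C q qd *v k0 q + G q)) + grad h0 q \<bullet> qd"
    define c where "c = - \<alpha> (hE D h0 k0 \<mu> q qd)"
    have val: "(1 / \<mu>) * ((qd - k0 q) \<bullet> (D q *v (jac k0 q *v qd) + C q qd *v k0 q + G q - B *v u))
             + grad h0 q \<bullet> qd = K - (1 / \<mu>) * (e \<bullet> (B *v u))" for u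
      unfolding K_def e_def by (simp add: inner_diff_right algebra_simps)
    show "(SUP u. ereal ((1 / \<mu>) * ((qd - k0 q) \<bullet>
                 (D q *v (jac k0 q *v qd) + C q qd *v k0 q + G q - B *v u)) + grad h0 q \<bullet> qd))
          > ereal (- \<alpha> (hE D h0 k0 \<mu> q qd))"
      unfolding val c_def[symmetric]
    proof (cases "e = 0")
      case True
      have "hE D h0 k0 \<mu> q qd = h0 q" unfolding hE_def using True e_def by simp
      moreover have "qd = k0 q" using True e_def by simp
      ultimately have "K - (1 / \<mu>) * (e \<bullet> (B *v 0)) > c"
        using nominal qQ True unfolding K_def c_def by simp
      then show "ereal c < (SUP u. ereal (K - 1 / \<mu> * (e \<bullet> (B *v u))))"
        by (simp add: less_SUP_iff) (metis divide_eq_0_iff inner_zero_right matrix_vector_mult_0_right diff_zero)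
    next
      case False
      have ee: "e \<bullet> e > 0" using False by simp
      define s where "s = - \<mu> * (\<bar>c - K\<bar> + 1) / (e \<bullet> e)"
      define u where "u = Bi *v (s *\<^sub>R e)"
      have Bu: "B *v u = s *\<^sub>R e" unfolding u_def matrix_vector_mul_assoc Bi by simp
      have "(1 / \<mu>) * (e \<bullet> (B *v u)) = - (\<bar>c - K\<bar> + 1)"
        unfolding Bu s_def using ee mu_pos by (simp add: field_simps)
      then have "K - (1 / \<mu>) * (e \<bullet> (B *v u)) > c" by linarith
      then show "ereal c < (SUP u. ereal (K - 1 / \<mu> * (e \<bullet> (B *v u))))"
        by (simp add: less_SUP_iff) (metis divide_inverse mult.commute inverse_eq_divide)
    qed
  qed
qed

end
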